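(* Let $M^Q(a|x)$ and $N^{Q'}(b|y)$ be any two simple PMDs, possibly on different Hilbert spaces $\mathcal{H}^Q$, $\mathcal{H}^{Q'}$ and with arbitrary finite program and outcome sets. Then both $M^Q(a|x)\succeq N^{Q'}(b|y)$ and $N^{Q'}(b|y)\succeq M^Q(a|x)$ hold.
   Context: All Hilbert spaces are finite-dimensional and all alphabets are finite. A PMD on $\mathcal{H}^Q$ with program set $\mathcal{X}$ and outcome set $\mathcal{A}$ is a family $\{M^Q(a|x)\}$ of operators on $\mathcal{H}^Q$ with $M^Q(a|x)\ge0$ and $\sum_a M^Q(a|x)=\mathbb{1}^Q$ for every $x$. A PMD is simple (i.e. a compatible family of POVMs) if there exist a POVM $\{\tilde M^Q(i)\}_{i\in\mathcal{I}}$ on $\mathcal{H}^Q$ and a conditional probability distribution $p(a|i,x)$ with $M^Q(a|x)=\sum_i p(a|i,x)\tilde M^Q(i)$ for all $a,x$. $M^Q(a|x)\succeq N^{Q'}(b|y)$ means that there exist a probability distribution $\mu(r)$, for each $r$ a quantum instrument $\{\mathcal{E}^{Q'\to Q}_{i|r}\}_i$, and conditional probability distributions $p(x|i,y,r)$, $q(b|a,x,i,y,r)$ such that for all $b,y$ \[N^{Q'}(b|y)=\sum_r\mu(r)\sum_{i,x,a}q(b|a,x,i,y,r)\,p(x|i,y,r)\,(\mathcal{E}^{Q'\to Q}_{i|r})^\dagger[M^Q(a|x)],\] with $\mathcal{E}^\dagger$ the adjoint (trace-dual) map. *)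

theory Defs
  imports "Jordan_Normal_Form.Matrix" "Jordan_Normal_Form.Conjugate"
begin

(* Operators on a d-dimensional Hilbert space H = C^d are complex d x d matrices. *)

(* positive semidefinite operator: <v, A v> >= 0 for all v (complex order: real and nonnegative) *)
definition psd :: "nat \<Rightarrow> complex mat \<Rightarrow> bool" where
  "psd d A \<longleftrightarrow> A \<in> carrier_mat d d \<and> (\<forall>v \<in> carrier_vec d. 0 \<le> (A *\<^sub>v v) \<bullet>c v)"

definition mat_sum :: "nat \<Rightarrow> 'i set \<Rightarrow> ('i \<Rightarrow> complex mat) \<Rightarrow> complex mat" where
  "mat_sum d S f = mat d d (\<lambda>ij. \<Sum>s\<in>S. f s $$ ij)"

definition mtrace :: "complex mat \<Rightarrow> complex" where
  "mtrace A = (\<Sum>i<dim_row A. A $$ (i, i))"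

definition is_distr :: "'s set \<Rightarrow> ('s \<Rightarrow> real) \<Rightarrow> bool" where
  "is_distr S \<mu> \<longleftrightarrow> finite S \<and> (\<forall>s\<in>S. 0 \<le> \<mu> s) \<and> (\<Sum>s\<in>S. \<mu> s) = 1"

definition povm :: "nat \<Rightarrow> 'i set \<Rightarrow> ('i \<Rightarrow> complex mat) \<Rightarrow> bool" where
  "povm d I F \<longleftrightarrow> finite I \<and> (\<forall>i\<in>I. psd d (F i)) \<and> mat_sum d I F = 1\<^sub>m d"

definition pmd :: "nat \<Rightarrow> 'a set \<Rightarrow> 'x set \<Rightarrow> ('a \<Rightarrow> 'x \<Rightarrow> complex mat) \<Rightarrow> bool" where
  "pmd d A X M \<longleftrightarrow> finite A \<and> finite X \<and> X \<noteq> {} \<and> (\<forall>x\<in>X. povm d A (\<lambda>a. M a x))"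

definition simple_pmd :: "nat \<Rightarrow> 'a set \<Rightarrow> 'x set \<Rightarrow> ('a \<Rightarrow> 'x \<Rightarrow> complex mat) \<Rightarrow> bool" where
  "simple_pmd d A X M \<longleftrightarrow>
     (\<exists>(I :: nat set) Mt p. povm d I Mt \<and>
        (\<forall>i\<in>I. \<forall>x\<in>X. is_distr A (\<lambda>a. p a i x)) \<and>
        (\<forall>a\<in>A. \<forall>x\<in>X. M a x = mat_sum d I (\<lambda>i. complex_of_real (p a i x) \<cdot>\<^sub>m Mt i)))"

definition lin_map :: "nat \<Rightarrow> nat \<Rightarrow> (complex mat \<Rightarrow> complex mat) \<Rightarrow> bool" where
  "lin_map d1 d2 E \<longleftrightarrow>
     (\<forall>\<rho> \<in> carrier_mat d1 d1. E \<rho> \<in> carrier_mat d2 d2) \<and>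
     (\<forall>\<rho> \<in> carrier_mat d1 d1. \<forall>\<sigma> \<in> carrier_mat d1 d1. E (\<rho> + \<sigma>) = E \<rho> + E \<sigma>) \<and>
     (\<forall>c. \<forall>\<rho> \<in> carrier_mat d1 d1. E (c \<cdot>\<^sub>m \<rho>) = c \<cdot>\<^sub>m E \<rho>)"

(* (id_n \<otimes> E)(Y) for Y an operator on C^n \<otimes> C^d1, written blockwise *)
definition ampl :: "nat \<Rightarrow> nat \<Rightarrow> nat \<Rightarrow> (complex mat \<Rightarrow> complex mat) \<Rightarrow> complex mat \<Rightarrow> complex mat" where
  "ampl n d1 d2 E Y = mat (n * d2) (n * d2) (\<lambda>(r, c).
      E (mat d1 d1 (\<lambda>(k, l). Y $$ ((r div d2) * d1 + k, (c div d2) * d1 + l))) $$ (r mod d2, c mod d2))"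

definition cp_map :: "nat \<Rightarrow> nat \<Rightarrow> (complex mat \<Rightarrow> complex mat) \<Rightarrow> bool" where
  "cp_map d1 d2 E \<longleftrightarrow> lin_map d1 d2 E \<and>
     (\<forall>n Y. psd (n * d1) Y \<longrightarrow> psd (n * d2) (ampl n d1 d2 E Y))"

definition instrument :: "nat \<Rightarrow> nat \<Rightarrow> 'i set \<Rightarrow> ('i \<Rightarrow> complex mat \<Rightarrow> complex mat) \<Rightarrow> bool" where
  "instrument d1 d2 I E \<longleftrightarrow> finite I \<and> (\<forall>i\<in>I. cp_map d1 d2 (E i)) \<and>
     (\<forall>\<rho> \<in> carrier_mat d1 d1. mtrace (mat_sum d2 I (\<lambda>i. E i \<rho>)) = mtrace \<rho>)"

(* trace-dual (Heisenberg picture) of E : ops(C^d1) -> ops(C^d2), written out in the matrix-unit basis: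
   mtrace (\<rho> * dual E A) = mtrace (E \<rho> * A) *)
definition dual_map :: "nat \<Rightarrow> (complex mat \<Rightarrow> complex mat) \<Rightarrow> complex mat \<Rightarrow> complex mat" where
  "dual_map d1 E A = mat d1 d1 (\<lambda>(k, l).
      mtrace (E (mat d1 d1 (\<lambda>(i, j). if i = l \<and> j = k then 1 else 0)) * A))"

(* M \<succeq> N : N (on C^dN, outcomes B, programs Y) is simulable from M (on C^dM, outcomes A, programs X) *)
definition simulates ::
  "nat \<Rightarrow> 'a set \<Rightarrow> 'x set \<Rightarrow> ('a \<Rightarrow> 'x \<Rightarrow> complex mat) \<Rightarrow>
   nat \<Rightarrow> 'b set \<Rightarrow> 'y set \<Rightarrow> ('b \<Rightarrow> 'y \<Rightarrow> complex mat) \<Rightarrow> bool" where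
  "simulates dM A X M dN B Y N \<longleftrightarrow>
     (\<exists>(R :: nat set) \<mu> (I :: nat \<Rightarrow> nat set) E p q.
        is_distr R \<mu> \<and>
        (\<forall>r\<in>R. instrument dN dM (I r) (E r) \<and>
           (\<forall>i\<in>I r. \<forall>y\<in>Y. is_distr X (\<lambda>x. p x i y r) \<and>
              (\<forall>x\<in>X. \<forall>a\<in>A. is_distr B (\<lambda>b. q b a x i y r)))) \<and>
        (\<forall>b\<in>B. \<forall>y\<in>Y. N b y =
           mat_sum dN R (\<lambda>r. complex_of_real (\<mu> r) \<cdot>\<^sub>m
             mat_sum dN (I r) (\<lambda>i. mat_sum dN X (\<lambda>x. mat_sum dN A (\<lambda>a.
               complex_of_real (q b a x i y r * p x i y r) \<cdot>\<^sub>m dual_map dN (E r i) (M a x)))))))"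

end

theory Submission
  imports Defs
begin

definition qf :: "nat \<Rightarrow> (nat \<Rightarrow> nat \<Rightarrow> complex) \<Rightarrow> (nat \<Rightarrow> complex) \<Rightarrow> complex" where
  "qf d P v = (\<Sum>i<d. \<Sum>j<d. P i j * v j * cnj (v i))"

lemma qf_two:
  assumes "i < d" "j < d" "i \<noteq> j"
  shows "qf d P (\<lambda>k. (if k = i then \<alpha> else 0) + (if k = j then \<beta> else 0)) =
    P i i * \<alpha> * cnj \<alpha> + P i j * \<beta> * cnj \<alpha> + P j i * \<alpha> * cnj \<beta> + P j j * \<beta> * cnj \<beta>"
proof -
  have e: "P a b * ((if b = i then \<alpha> else 0) + (if b = j then \<beta> else 0)) * cnj ((if a = i then \<alpha> else 0) + (if a = j then \<beta> else 0))
     = (if b = i then (if a = i then P i i * \<alpha> * cnj \<alpha> else 0) else 0)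
     + (if b = j then (if a = i then P i j * \<beta> * cnj \<alpha> else 0) else 0)
     + (if b = i then (if a = j then P j i * \<alpha> * cnj \<beta> else 0) else 0)
     + (if b = j then (if a = j then P j j * \<beta> * cnj \<beta> else 0) else 0)" for a b
    using assms by (auto simp: algebra_simps)
  show ?thesis unfolding qf_def e using assms by (simp add: sum.distrib)
qed

lemma qf_one:
  assumes "i < d"
  shows "qf d P (\<lambda>k. if k = i then \<alpha> else 0) = P i i * \<alpha> * cnj \<alpha>"
proof -
  have e: "P a b * (if b = i then \<alpha> else 0) * cnj (if a = i then \<alpha> else 0) = (if b = i then (if a = i then P i i * \<alpha> * cnj \<alpha> else 0) else 0)" for a b
    by auto
  show ?thesis unfolding qf_def e using assms by simp
qed

lemma psd_diag:
  assumes "\<forall>v. 0 \<le> qf d P v" "i < d"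
  shows "0 \<le> P i i"
  using assms(1)[rule_format, of "\<lambda>k. if k = i then 1 else 0"] qf_one[OF assms(2), of P 1] by simp

lemma psd_herm:
  assumes H: "\<forall>v. 0 \<le> qf d P v" and "i < d" "j < d"
  shows "P j i = cnj (P i j)"
proof (cases "i = j")
  case True
  then show ?thesis using psd_diag[OF H \<open>i<d\<close>] by (auto simp: less_eq_complex_def complex_eq_iff)
next
  case False
  have a: "0 \<le> P i i" "0 \<le> P j j" using psd_diag H assms by auto
  have 1: "0 \<le> P i i + P i j + P j i + P j j"
    using H[rule_format, of "\<lambda>k. (if k = i then 1 else 0) + (if k = j then 1 else 0)"] qf_two[OF assms(2,3) False, of P 1 1] by simp
  have 2: "0 \<le> P i i + P i j * \<i> - P j i * \<i> + P j j"
    using H[rule_format, of "\<lambda>k. (if k = i then 1 else 0) + (if k = j then \<i> else 0)"] qf_two[OF assms(2,3) False, of P 1 \<i>] by (simp add: mult.assoc)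
  from a 1 2 show ?thesis by (auto simp: less_eq_complex_def complex_eq_iff)
qed


lemma qf_ext:
  "qf (Suc d) P (v(d:=t)) = qf d P v + t * (\<Sum>i<d. P i d * cnj (v i)) + cnj t * (\<Sum>j<d. P d j * v j) + P d d * t * cnj t"
proof -
  have a: "(\<Sum>j<d. P i j * (v(d:=t)) j * cnj ((v(d:=t)) i)) = (\<Sum>j<d. P i j * v j * cnj (v i))" if "i < d" for i
    using that by (intro sum.cong) auto
  have b: "(\<Sum>j<d. P d j * (v(d:=t)) j * cnj ((v(d:=t)) d)) = cnj t * (\<Sum>j<d. P d j * v j)"
    by (auto simp: sum_distrib_left algebra_simps intro!: sum.cong)
  have c: "(\<Sum>i<d. P i d * t * cnj ((v(d:=t)) i)) = t * (\<Sum>i<d. P i d * cnj (v i))"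
    by (auto simp: sum_distrib_left algebra_simps intro!: sum.cong)
  have "qf (Suc d) P (v(d:=t)) = (\<Sum>i<d. (\<Sum>j<d. P i j * (v(d:=t)) j * cnj ((v(d:=t)) i)) + P i d * t * cnj ((v(d:=t)) i))
      + ((\<Sum>j<d. P d j * (v(d:=t)) j * cnj ((v(d:=t)) d)) + P d d * t * cnj t)"
    unfolding qf_def by (simp add: sum.lessThan_Suc)
  also have "\<dots> = qf d P v + t * (\<Sum>i<d. P i d * cnj (v i)) + (cnj t * (\<Sum>j<d. P d j * v j) + P d d * t * cnj t)"
    unfolding b sum.distrib c[symmetric] qf_def by (simp add: a)
  finally show ?thesis by simp
qed

lemma qf_restrict: "qf d P v = qf (Suc d) P (v(d:=0))"
  using qf_ext[of d P v 0] by simp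

lemma zero_col:
  assumes H: "\<forall>v. 0 \<le> qf (Suc d) P v" and z0: "P d d = 0" and i: "i < d"
  shows "P i d = 0"
proof -
  define z where "z = P i d"
  have pd: "0 \<le> P i i" using psd_diag[OF H, of i] i by simp
  define p where "p = Re (P i i)"
  have Pii: "P i i = of_real p" using pd unfolding p_def by (auto simp: less_eq_complex_def complex_eq_iff)
  have p0: "p \<ge> 0" using pd unfolding p_def by (auto simp: less_eq_complex_def)
  define c where "c = 1 / (p + 1)"
  have c0: "c > 0" using p0 unfolding c_def by auto
  have pc: "p * c < 1" using p0 unfolding c_def by (auto simp: field_simps)
  have herm: "P d i = cnj z" using psd_herm[OF H, of i d] i unfolding z_def by simp
  have "0 \<le> qf (Suc d) P (\<lambda>k. (if k = i then - of_real c * z else 0) + (if k = d then 1 else 0))"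
    using H by blast
  also have "\<dots> = P i i * (- of_real c * z) * cnj (- of_real c * z) + P i d * 1 * cnj (- of_real c * z)
     + P d i * (- of_real c * z) * cnj 1 + P d d * 1 * cnj 1"
    by (rule qf_two) (use i in auto)
  finally have "0 \<le> Re (P i i * (- of_real c * z) * cnj (- of_real c * z) + P i d * 1 * cnj (- of_real c * z)
     + P d i * (- of_real c * z) * cnj 1 + P d d * 1 * cnj 1)" by (simp add: less_eq_complex_def)
  also have "\<dots> = c * ((Re z)^2 + (Im z)^2) * (p * c - 2)"
    unfolding Pii herm z0 z_def[symmetric] by (simp add: algebra_simps power2_eq_square)
  finally have "0 \<le> c * ((Re z)^2 + (Im z)^2) * (p * c - 2)" .
  moreover have "p * c - 2 < 0" using pc by simp
  ultimately have "c * ((Re z)^2 + (Im z)^2) \<le> 0"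
    by (metis mult_pos_neg not_le mult.commute)
  hence "(Re z)^2 + (Im z)^2 \<le> 0" using c0 by (simp add: mult_le_0_iff)
  hence "Re z = 0" "Im z = 0" by (smt (verit) zero_le_power2 zero_eq_power2)+
  thus ?thesis unfolding z_def by (simp add: complex_eq_iff)
qed


lemma psd_decomp:
  "\<forall>v. 0 \<le> qf d P v \<Longrightarrow> \<exists>(m::nat) u. \<forall>i<d. \<forall>j<d. P i j = (\<Sum>k<m. u k i * cnj (u k j))"
proof (induction d arbitrary: P)
  case 0
  then show ?case by auto
next
  case (Suc d P)
  note H = Suc.prems
  have Hd: "\<forall>v. 0 \<le> qf d P v" using H qf_restrict by metis
  have herm: "\<And>i j. i < Suc d \<Longrightarrow> j < Suc d \<Longrightarrow> P j i = cnj (P i j)"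
    using psd_herm[OF H] by blast
  show ?case
  proof (cases "P d d = 0")
    case True
    have zc: "P i d = 0" "P d i = 0" if "i < d" for i
      using zero_col[OF H True that] herm[of i d] that by auto
    obtain m :: nat and u where mu: "\<forall>i<d. \<forall>j<d. P i j = (\<Sum>k<m. u k i * cnj (u k j))"
      using Suc.IH[OF Hd] by blast
    define u' where "u' k i = (if i = d then 0 else u k i)" for k i
    have "\<forall>i<Suc d. \<forall>j<Suc d. P i j = (\<Sum>k<m. u' k i * cnj (u' k j))"
    proof (intro allI impI)
      fix i j assume "i < Suc d" "j < Suc d"
      then consider "i = d" | "j = d" | "i < d" "j < d" by linarith
      then show "P i j = (\<Sum>k<m. u' k i * cnj (u' k j))"
        by cases (use zc True mu \<open>i < Suc d\<close> \<open>j < Suc d\<close> in \<open>auto simp: u'_def less_Suc_eq\<close>)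
    qed
    then show ?thesis by blast
  next
    case False
    define a where "a = P d d"
    have a0: "0 \<le> a" using psd_diag[OF H, of d] unfolding a_def by simp
    define r where "r = Re a"
    have ar: "a = of_real r" using a0 unfolding r_def by (auto simp: less_eq_complex_def complex_eq_iff)
    have r0: "r > 0" using a0 False unfolding r_def a_def by (auto simp: less_eq_complex_def complex_eq_iff)
    define s where "s = sqrt r"
    have s0: "s > 0" using r0 unfolding s_def by auto
    have ss: "of_real s * of_real s = a" unfolding s_def ar using r0
      by (simp flip: of_real_mult)
    define w where "w i = P i d / of_real s" for i
    define P' where "P' i j = P i j - w i * cnj (w j)" for i j
    have Hd': "\<forall>v. 0 \<le> qf d P' v"
    proof
      fix v
      define \<beta> where "\<beta> = (\<Sum>j<d. P d j * v j)"
      define t where "t = - \<beta> / a"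
      have cb: "(\<Sum>i<d. P i d * cnj (v i)) = cnj \<beta>"
        unfolding \<beta>_def cnj_sum by (intro sum.cong refl) (use herm[of d] in auto)
      have e1: "qf d P' v = qf d P v - (\<Sum>i<d. \<Sum>j<d. w i * cnj (w j) * v j * cnj (v i))"
        unfolding qf_def P'_def by (simp add: algebra_simps sum_subtractf)
      have tm: "w i * cnj (w j) * v j * cnj (v i) = (P i d * cnj (v i)) * (P d j * v j) / a" if "j < d" for i j
      proof -
        have h: "P d j = cnj (P j d)" using herm[of j d] that by simp
        show ?thesis unfolding w_def ss[symmetric] h using s0 by (simp add: field_simps)
      qed
      have e2': "(\<Sum>i<d. \<Sum>j<d. w i * cnj (w j) * v j * cnj (v i)) = (\<Sum>i<d. P i d * cnj (v i)) * (\<Sum>j<d. P d j * v j) / a"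
        unfolding sum_product sum_divide_distrib
        by (intro sum.cong refl) (simp add: tm)
      have e2: "(\<Sum>i<d. \<Sum>j<d. w i * cnj (w j) * v j * cnj (v i)) = cnj \<beta> * \<beta> / a"
        unfolding e2' cb \<beta>_def ..
      have e3: "qf d P v - cnj \<beta> * \<beta> / a = qf (Suc d) P (v(d:=t))"
        unfolding qf_ext cb \<beta>_def[symmetric] t_def a_def[symmetric] using False
        by (simp add: ar field_simps)
      show "0 \<le> qf d P' v" using H e1 e2 e3 by metis
    qed
    obtain m :: nat and u where mu: "\<forall>i<d. \<forall>j<d. P' i j = (\<Sum>k<m. u k i * cnj (u k j))"
      using Suc.IH[OF Hd'] by blast
    define u' where "u' k i = (if k < m then (if i = d then 0 else u k i) else w i)" for k i
    have wd: "w d = of_real s" using s0 unfolding w_def a_def[symmetric] ss[symmetric] by simp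
    have "\<forall>i<Suc d. \<forall>j<Suc d. P i j = (\<Sum>k<Suc m. u' k i * cnj (u' k j))"
    proof (intro allI impI)
      fix i j assume ij: "i < Suc d" "j < Suc d"
      have e: "(\<Sum>k<Suc m. u' k i * cnj (u' k j)) = (\<Sum>k<m. u' k i * cnj (u' k j)) + w i * cnj (w j)"
        by (simp add: u'_def)
      from ij consider "i = d" "j = d" | "i = d" "j < d" | "i < d" "j = d" | "i < d" "j < d" by linarith
      then show "P i j = (\<Sum>k<Suc m. u' k i * cnj (u' k j))"
      proof cases
        case 1
        have z: "(\<Sum>k<m. u' k i * cnj (u' k j)) = 0" using 1 by (simp add: u'_def)
        show ?thesis unfolding e z using wd ss 1 by (simp add: a_def)
      next
        case 2
        have z: "(\<Sum>k<m. u' k i * cnj (u' k j)) = 0" using 2 by (simp add: u'_def)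
        have "w i * cnj (w j) = cnj (P j d)" using 2 wd s0 by (simp add: w_def)
        then show ?thesis unfolding e z using herm[of j d] 2 by simp
      next
        case 3
        have z: "(\<Sum>k<m. u' k i * cnj (u' k j)) = 0" using 3 by (simp add: u'_def)
        have "w i * cnj (w j) = P i d" using 3 wd s0 by (simp add: w_def)
        then show ?thesis unfolding e z using 3 by simp
      next
        case 4
        have z: "(\<Sum>k<m. u' k i * cnj (u' k j)) = (\<Sum>k<m. u k i * cnj (u k j))"
          using 4 by (intro sum.cong) (auto simp: u'_def)
        have "P i j - w i * cnj (w j) = (\<Sum>k<m. u k i * cnj (u k j))" using mu 4 by (simp add: P'_def)
        then show ?thesis unfolding e z by (metis diff_add_cancel)
      qed
    qed
    then show ?thesis by blast
  qed
qed


lemma sum_split: "(\<Sum>r<n*d. (f :: nat \<Rightarrow> 'a::comm_monoid_add) r) = (\<Sum>R<n. \<Sum>s<d. f (R*d+s))"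
proof -
  have "sum f {R*d..<R*d+d} = (\<Sum>s<d. f (R*d+s))" for R
    using sum.shift_bounds_nat_ivl[of f 0 "R*d" d] by (simp add: add.commute lessThan_atLeast0)
  then show ?thesis by (simp flip: sum.nat_group)
qed
lemma mtrace_mult: assumes "A \<in> carrier_mat d d" "B \<in> carrier_mat d d"
  shows "mtrace (A * B) = (\<Sum>k<d. \<Sum>l<d. A $$ (k,l) * B $$ (l,k))"
  using assms by (simp add: mtrace_def scalar_prod_def lessThan_atLeast0)
lemma mat_sum_index[simp]: "i < d \<Longrightarrow> j < d \<Longrightarrow> mat_sum d S f $$ (i,j) = (\<Sum>s\<in>S. f s $$ (i,j))"
  by (simp add: mat_sum_def)
lemma mat_sum_carrier[simp]: "mat_sum d S f \<in> carrier_mat d d" "dim_row (mat_sum d S f) = d" "dim_col (mat_sum d S f) = d"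
  by (auto simp: mat_sum_def)


definition E00 :: "nat \<Rightarrow> complex mat" where
  "E00 d = mat d d (\<lambda>(k,l). if k = 0 \<and> l = 0 then 1 else 0)"

definition mp :: "complex mat \<Rightarrow> nat \<Rightarrow> complex mat \<Rightarrow> complex mat" where
  "mp F dM \<rho> = mtrace (F * \<rho>) \<cdot>\<^sub>m E00 dM"

lemma quad: assumes "A \<in> carrier_mat d d" "v \<in> carrier_vec d"
  shows "(A *\<^sub>v v) \<bullet>c v = (\<Sum>i<d. \<Sum>j<d. A $$ (i,j) * v $ j * cnj (v $ i))"
  using assms by (simp add: scalar_prod_def mult_mat_vec_def sum_distrib_right lessThan_atLeast0)

lemma psd_qf: assumes "psd d F" shows "\<forall>v. 0 \<le> qf d (\<lambda>k l. F $$ (k,l)) v"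
proof
  fix v
  have F: "F \<in> carrier_mat d d" using assms by (simp add: psd_def)
  have "0 \<le> (F *\<^sub>v vec d v) \<bullet>c vec d v" using assms by (simp add: psd_def)
  also have "\<dots> = qf d (\<lambda>k l. F $$ (k,l)) v" unfolding quad[OF F vec_carrier] qf_def
    by (intro sum.cong refl) simp
  finally show "0 \<le> qf d (\<lambda>k l. F $$ (k,l)) v" .
qed

lemma sum_if_const: "(\<Sum>x\<in>S. if P then f x else 0) = (if P then (\<Sum>x\<in>S. f x) else 0)"
  by auto

lemma mp_cp:
  assumes F: "psd dN F" and dM: "0 < dM"
  shows "cp_map dN dM (mp F dM)"
proof -
  have Fc: "F \<in> carrier_mat dN dN" using F by (simp add: psd_def)
  have lin: "lin_map dN dM (mp F dM)"
    unfolding lin_map_def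
  proof (intro conjI ballI allI)
    fix \<rho> :: "complex mat" assume "\<rho> \<in> carrier_mat dN dN"
    show "mp F dM \<rho> \<in> carrier_mat dM dM" by (simp add: mp_def E00_def)
  next
    fix \<rho> \<sigma> :: "complex mat" assume r: "\<rho> \<in> carrier_mat dN dN" and s: "\<sigma> \<in> carrier_mat dN dN"
    have "mtrace (F * (\<rho> + \<sigma>)) = mtrace (F * \<rho>) + mtrace (F * \<sigma>)"
      apply (subst mtrace_mult[OF Fc, of "\<rho> + \<sigma>"])
      using r s apply simp
      unfolding mtrace_mult[OF Fc r] mtrace_mult[OF Fc s]
      using r s by (simp add: sum.distrib algebra_simps)
    then show "mp F dM (\<rho> + \<sigma>) = mp F dM \<rho> + mp F dM \<sigma>"
      unfolding mp_def by (intro eq_matI) (auto simp: E00_def algebra_simps)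
  next
    fix c and \<rho> :: "complex mat" assume r: "\<rho> \<in> carrier_mat dN dN"
    have "mtrace (F * (c \<cdot>\<^sub>m \<rho>)) = c * mtrace (F * \<rho>)"
      apply (subst mtrace_mult[OF Fc, of "c \<cdot>\<^sub>m \<rho>"])
      using r apply simp
      unfolding mtrace_mult[OF Fc r]
      using r by (simp add: sum_distrib_left algebra_simps)
    then show "mp F dM (c \<cdot>\<^sub>m \<rho>) = c \<cdot>\<^sub>m mp F dM \<rho>"
      unfolding mp_def by (intro eq_matI) (auto simp: E00_def algebra_simps)
  qed
  obtain m :: nat and u where u: "\<forall>i<dN. \<forall>j<dN. F $$ (i,j) = (\<Sum>k<m. u k i * cnj (u k j))"
    using psd_decomp[OF psd_qf[OF F]] by blast
  have cp: "psd (n * dM) (ampl n dN dM (mp F dM) Y)" if Y: "psd (n * dN) Y" for n Y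
  proof -
    have Yc: "Y \<in> carrier_mat (n*dN) (n*dN)" using Y by (simp add: psd_def)
    define G where "G R C = (\<Sum>k<dN. \<Sum>l<dN. F $$ (k,l) * Y $$ (R*dN + l, C*dN + k))" for R C
    have idx: "R*d+s < n*d" if "R < n" "s < d" for R s d :: nat
    proof -
      have "R*d+s < R*d + d" using that by simp
      also have "\<dots> = (R+1)*d" by simp
      also have "\<dots> \<le> n*d" using that by (intro mult_right_mono) auto
      finally show ?thesis .
    qed
    have ent: "ampl n dN dM (mp F dM) Y $$ (R*dM+s, C*dM+t) = (if s = 0 \<and> t = 0 then G R C else 0)"
      if "R < n" "C < n" "s < dM" "t < dM" for R C s t
    proof -
      have bc: "mat dN dN (\<lambda>(k, l). Y $$ (R * dN + k, C * dN + l)) \<in> carrier_mat dN dN" by simp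
      have "mtrace (F * mat dN dN (\<lambda>(k, l). Y $$ (R * dN + k, C * dN + l))) = G R C"
        unfolding mtrace_mult[OF Fc bc] G_def by (intro sum.cong refl) simp
      moreover have "R*dM+s < n*dM" "C*dM+t < n*dM" using idx that by auto
      moreover have "(R*dM+s) div dM = R" "(R*dM+s) mod dM = s" "(C*dM+t) div dM = C" "(C*dM+t) mod dM = t"
        using that by auto
      ultimately show ?thesis using that
        by (simp add: ampl_def mp_def E00_def)
    qed
    show ?thesis unfolding psd_def
    proof (intro conjI ballI)
      show "ampl n dN dM (mp F dM) Y \<in> carrier_mat (n * dM) (n * dM)" by (simp add: ampl_def)
    next
      fix v :: "complex vec" assume v: "v \<in> carrier_vec (n * dM)"
      let ?A = "ampl n dN dM (mp F dM) Y"
      have "(?A *\<^sub>v v) \<bullet>c v = (\<Sum>r<n*dM. \<Sum>c<n*dM. ?A $$ (r,c) * v $ c * cnj (v $ r))"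
        by (rule quad) (use v in \<open>auto simp: ampl_def\<close>)
      also have "\<dots> = (\<Sum>R<n. \<Sum>s<dM. \<Sum>C<n. \<Sum>t<dM. ?A $$ (R*dM+s, C*dM+t) * v $ (C*dM+t) * cnj (v $ (R*dM+s)))"
        by (simp add: sum_split)
      also have "\<dots> = (\<Sum>R<n. \<Sum>s<dM. \<Sum>C<n. \<Sum>t<dM. if t = 0 then (if s = 0 then G R C * v $ (C*dM) * cnj (v $ (R*dM)) else 0) else 0)"
        by (intro sum.cong refl) (auto simp: ent)
      also have "\<dots> = (\<Sum>R<n. \<Sum>C<n. G R C * v $ (C*dM) * cnj (v $ (R*dM)))"
        using dM by (simp add: sum_if_const)
      finally have q1: "(?A *\<^sub>v v) \<bullet>c v = (\<Sum>R<n. \<Sum>C<n. G R C * v $ (C*dM) * cnj (v $ (R*dM)))" .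
      define T where "T j R C k l = u j k * cnj (u j l) * Y $$ (R*dN+l, C*dN+k) * v $ (C*dM) * cnj (v $ (R*dM))" for j R C k l
      have g: "G R C * v $ (C*dM) * cnj (v $ (R*dM)) = (\<Sum>j<m. \<Sum>k<dN. \<Sum>l<dN. T j R C k l)" for R C
      proof -
        have "G R C * v $ (C*dM) * cnj (v $ (R*dM)) = (\<Sum>k<dN. \<Sum>l<dN. F $$ (k,l) * Y $$ (R*dN + l, C*dN + k) * v $ (C*dM) * cnj (v $ (R*dM)))"
          unfolding G_def by (simp add: sum_distrib_right)
        also have "\<dots> = (\<Sum>k<dN. \<Sum>l<dN. \<Sum>j<m. T j R C k l)"
          unfolding T_def by (intro sum.cong refl) (simp add: u sum_distrib_right)
        also have "\<dots> = (\<Sum>k<dN. \<Sum>j<m. \<Sum>l<dN. T j R C k l)"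
          by (rule sum.cong[OF refl], rule sum.swap)
        also have "\<dots> = (\<Sum>j<m. \<Sum>k<dN. \<Sum>l<dN. T j R C k l)"
          by (rule sum.swap)
        finally show ?thesis .
      qed
      have tot: "(\<Sum>R<n. \<Sum>C<n. G R C * v $ (C*dM) * cnj (v $ (R*dM))) = (\<Sum>j<m. \<Sum>R<n. \<Sum>C<n. \<Sum>k<dN. \<Sum>l<dN. T j R C k l)"
      proof -
        have "(\<Sum>R<n. \<Sum>C<n. G R C * v $ (C*dM) * cnj (v $ (R*dM))) = (\<Sum>R<n. \<Sum>C<n. \<Sum>j<m. \<Sum>k<dN. \<Sum>l<dN. T j R C k l)"
          by (simp add: g)
        also have "\<dots> = (\<Sum>R<n. \<Sum>j<m. \<Sum>C<n. \<Sum>k<dN. \<Sum>l<dN. T j R C k l)"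
          by (rule sum.cong[OF refl], rule sum.swap)
        also have "\<dots> = (\<Sum>j<m. \<Sum>R<n. \<Sum>C<n. \<Sum>k<dN. \<Sum>l<dN. T j R C k l)"
          by (rule sum.swap)
        finally show ?thesis .
      qed
      have pos: "0 \<le> (\<Sum>R<n. \<Sum>C<n. \<Sum>k<dN. \<Sum>l<dN. T j R C k l)" for j
      proof -
        define z where "z = vec (n*dN) (\<lambda>\<alpha>. v $ ((\<alpha> div dN) * dM) * u j (\<alpha> mod dN))"
        have zc: "z \<in> carrier_vec (n*dN)" unfolding z_def by simp
        have zi: "z $ (R*dN+l) = v $ (R*dM) * u j l" if "R < n" "l < dN" for R l
        proof -
          have "R*dN+l < n*dN" using idx that by auto
          moreover have "(R*dN+l) div dN = R" "(R*dN+l) mod dN = l" using that by auto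
          ultimately show ?thesis unfolding z_def by simp
        qed
        have "0 \<le> (Y *\<^sub>v z) \<bullet>c z" using Y zc by (simp add: psd_def)
        also have "\<dots> = (\<Sum>a<n*dN. \<Sum>b<n*dN. Y $$ (a,b) * z $ b * cnj (z $ a))"
          by (rule quad[OF Yc zc])
        also have "\<dots> = (\<Sum>R<n. \<Sum>l<dN. \<Sum>C<n. \<Sum>k<dN. Y $$ (R*dN+l, C*dN+k) * z $ (C*dN+k) * cnj (z $ (R*dN+l)))"
          by (simp add: sum_split)
        also have "\<dots> = (\<Sum>R<n. \<Sum>l<dN. \<Sum>C<n. \<Sum>k<dN. T j R C k l)"
          by (intro sum.cong refl) (simp only: zi T_def lessThan_iff, simp add: algebra_simps)
        also have "\<dots> = (\<Sum>R<n. \<Sum>C<n. \<Sum>l<dN. \<Sum>k<dN. T j R C k l)"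
          by (rule sum.cong[OF refl], rule sum.swap)
        also have "\<dots> = (\<Sum>R<n. \<Sum>C<n. \<Sum>k<dN. \<Sum>l<dN. T j R C k l)"
          by (rule sum.cong[OF refl], rule sum.cong[OF refl], rule sum.swap)
        finally show ?thesis .
      qed
      show "0 \<le> (ampl n dN dM (mp F dM) Y *\<^sub>v v) \<bullet>c v"
        unfolding q1 tot by (rule sum_nonneg) (rule pos)
    qed
  qed
  show ?thesis unfolding cp_map_def using lin cp by blast
qed

lemma sum_delta2:
  assumes "k < (d::nat)" "l < d"
  shows "(\<Sum>a<d. \<Sum>b<d. if b = l \<and> a = k then c else 0) = (c::complex)"
proof -
  have "(\<Sum>a<d. \<Sum>b<d. if b = l \<and> a = k then c else 0) = (\<Sum>a<d. \<Sum>b<d. if a = k then (if b = l then c else 0) else 0)"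
    by (intro sum.cong refl) auto
  also have "\<dots> = c" using assms by (simp only: sum_if_const) simp
  finally show ?thesis .
qed

lemma sum_delta00:
  assumes "0 < (d::nat)"
  shows "(\<Sum>k<d. \<Sum>l<d. c * (if k = 0 \<and> l = 0 then 1 else 0) * f l k) = (c::complex) * f 0 0"
proof -
  have "(\<Sum>k<d. \<Sum>l<d. c * (if k = 0 \<and> l = 0 then 1 else 0) * f l k) = (\<Sum>k<d. \<Sum>l<d. if k = 0 then (if l = 0 then c * f 0 0 else 0) else 0)"
    by (intro sum.cong refl) auto
  also have "\<dots> = c * f 0 0" using assms by (simp only: sum_if_const) simp
  finally show ?thesis .
qed

lemma dual_mp:
  assumes F: "F \<in> carrier_mat dN dN" and K: "K \<in> carrier_mat dM dM" and dM: "0 < dM"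
  shows "dual_map dN (mp F dM) K = (K $$ (0,0)) \<cdot>\<^sub>m F"
proof (rule eq_matI)
  show "dim_row (dual_map dN (mp F dM) K) = dim_row (K $$ (0, 0) \<cdot>\<^sub>m F)"
       "dim_col (dual_map dN (mp F dM) K) = dim_col (K $$ (0, 0) \<cdot>\<^sub>m F)"
    using F by (auto simp: dual_map_def)
  fix k l assume "k < dim_row (K $$ (0, 0) \<cdot>\<^sub>m F)" "l < dim_col (K $$ (0, 0) \<cdot>\<^sub>m F)"
  hence kl: "k < dN" "l < dN" using F by auto
  define U where "U = mat dN dN (\<lambda>(i, j). if i = l \<and> j = k then 1 else (0::complex))"
  have Uc: "U \<in> carrier_mat dN dN" unfolding U_def by simp
  have t1: "mtrace (F * U) = F $$ (k,l)"
    unfolding mtrace_mult[OF F Uc] using kl by (simp add: U_def if_distrib sum_delta2 cong: if_cong)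
  have Ec: "mtrace (F * U) \<cdot>\<^sub>m E00 dM \<in> carrier_mat dM dM" by (simp add: E00_def)
  have t2: "mtrace ((mtrace (F * U) \<cdot>\<^sub>m E00 dM) * K) = mtrace (F * U) * K $$ (0,0)"
    unfolding mtrace_mult[OF Ec K] using dM by (simp add: E00_def sum_delta00)
  show "dual_map dN (mp F dM) K $$ (k, l) = (K $$ (0, 0) \<cdot>\<^sub>m F) $$ (k, l)"
  proof -
    have t: "mtrace ((mtrace (F * mat dN dN (\<lambda>(i, j). if i = l \<and> j = k then 1 else 0)) \<cdot>\<^sub>m E00 dM) * K) = K $$ (0,0) * F $$ (k,l)"
      using t1 t2 unfolding U_def by simp
    show ?thesis using kl F t unfolding dual_map_def mp_def by simp
  qed
qed


lemma mp_trace: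
  assumes P: "povm dN I0 Nt" and dM: "0 < dM" and r: "\<rho> \<in> carrier_mat dN dN"
  shows "mtrace (mat_sum dM I0 (\<lambda>i. mp (Nt i) dM \<rho>)) = mtrace \<rho>"
proof -
  have Ntc: "Nt i \<in> carrier_mat dN dN" if "i \<in> I0" for i
    using P that by (auto simp: povm_def psd_def)
  have fin: "finite I0" using P by (simp add: povm_def)
  have id: "(\<Sum>i\<in>I0. Nt i $$ (k,l)) = (if k = l then 1 else 0)" if "k < dN" "l < dN" for k l
  proof -
    have "mat_sum dN I0 Nt $$ (k,l) = (1\<^sub>m dN) $$ (k,l)" using P by (simp add: povm_def)
    then show ?thesis using that by simp
  qed
  have "mtrace (mat_sum dM I0 (\<lambda>i. mp (Nt i) dM \<rho>)) = (\<Sum>k<dM. mat_sum dM I0 (\<lambda>i. mp (Nt i) dM \<rho>) $$ (k,k))"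
    unfolding mtrace_def by simp
  also have "\<dots> = (\<Sum>k<dM. \<Sum>i\<in>I0. mtrace (Nt i * \<rho>) * (if k = 0 then 1 else 0))"
    by (intro sum.cong refl) (auto simp: mp_def E00_def)
  also have "\<dots> = (\<Sum>i\<in>I0. \<Sum>k<dM. mtrace (Nt i * \<rho>) * (if k = 0 then 1 else 0))"
    by (rule sum.swap)
  also have "\<dots> = (\<Sum>i\<in>I0. mtrace (Nt i * \<rho>))"
    using dM by (simp add: if_distrib[of "\<lambda>x. _ * x"] cong: if_cong)
  also have "\<dots> = (\<Sum>i\<in>I0. \<Sum>k<dN. \<Sum>l<dN. Nt i $$ (k,l) * \<rho> $$ (l,k))"
    by (intro sum.cong refl mtrace_mult Ntc r) 
  also have "\<dots> = (\<Sum>k<dN. \<Sum>i\<in>I0. \<Sum>l<dN. Nt i $$ (k,l) * \<rho> $$ (l,k))"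
    by (rule sum.swap)
  also have "\<dots> = (\<Sum>k<dN. \<Sum>l<dN. \<Sum>i\<in>I0. Nt i $$ (k,l) * \<rho> $$ (l,k))"
    by (rule sum.cong[OF refl], rule sum.swap)
  also have "\<dots> = (\<Sum>k<dN. \<Sum>l<dN. (if k = l then 1 else 0) * \<rho> $$ (l,k))"
    by (intro sum.cong refl) (simp add: id flip: sum_distrib_right)
  also have "\<dots> = mtrace \<rho>"
    using r by (simp add: mtrace_def if_distrib[of "\<lambda>x. x * _"] cong: if_cong)
  finally show ?thesis .
qed


lemma sim_one:
  fixes A :: "'a set" and X :: "'x set" and M :: "'a \<Rightarrow> 'x \<Rightarrow> complex mat"
    and B :: "'b set" and Y :: "'y set" and N :: "'b \<Rightarrow> 'y \<Rightarrow> complex mat"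
  assumes dM: "1 \<le> dM" and pM: "pmd dM A X M" and pN: "pmd dN B Y N" and sN: "simple_pmd dN B Y N"
  shows "simulates dM A X M dN B Y N"
proof -
  obtain I0 :: "nat set" and Nt pN' where P: "povm dN I0 Nt"
    and dist: "\<forall>i\<in>I0. \<forall>y\<in>Y. is_distr B (\<lambda>b. pN' b i y)"
    and Neq: "\<forall>b\<in>B. \<forall>y\<in>Y. N b y = mat_sum dN I0 (\<lambda>i. complex_of_real (pN' b i y) \<cdot>\<^sub>m Nt i)"
    using sN unfolding simple_pmd_def by blast
  obtain x0 where x0: "x0 \<in> X" using pM unfolding pmd_def by blast
  have finX: "finite X" and finA: "finite A" using pM by (auto simp: pmd_def)
  have dM0: "0 < dM" using dM by simp
  have Ntc: "Nt i \<in> carrier_mat dN dN" if "i \<in> I0" for i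
    using P that by (auto simp: povm_def psd_def)
  have Ntd: "dim_row (Nt i) = dN" "dim_col (Nt i) = dN" if "i \<in> I0" for i
    using Ntc[OF that] by auto
  have Ntp: "psd dN (Nt i)" if "i \<in> I0" for i
    using P that by (auto simp: povm_def)
  have Mc: "M a x \<in> carrier_mat dM dM" if "a \<in> A" "x \<in> X" for a x
    using pM that by (auto simp: pmd_def povm_def psd_def)
  have Nc: "N b y \<in> carrier_mat dN dN" if "b \<in> B" "y \<in> Y" for b y
    using pN that by (auto simp: pmd_def povm_def psd_def)
  have Msum: "(\<Sum>a\<in>A. M a x0 $$ (0,0)) = 1"
  proof -
    have "mat_sum dM A (\<lambda>a. M a x0) $$ (0,0) = (1\<^sub>m dM) $$ (0,0)"
      using pM x0 by (simp add: pmd_def povm_def)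
    then show ?thesis using dM0 by simp
  qed
  define E :: "nat \<Rightarrow> nat \<Rightarrow> complex mat \<Rightarrow> complex mat" where "E r i = mp (Nt i) dM" for r i
  define p :: "'x \<Rightarrow> nat \<Rightarrow> 'y \<Rightarrow> nat \<Rightarrow> real" where "p x i y r = (if x = x0 then 1 else 0)" for x i y r
  define q :: "'b \<Rightarrow> 'a \<Rightarrow> 'x \<Rightarrow> nat \<Rightarrow> 'y \<Rightarrow> nat \<Rightarrow> real" where "q b a x i y r = pN' b i y" for b a x i y r
  have inst: "instrument dN dM I0 (E r)" for r
    unfolding instrument_def E_def
    using P mp_cp[OF Ntp dM0] mp_trace[OF P dM0] by (auto simp: povm_def)
  have pd: "is_distr X (\<lambda>x. p x i y r)" for i y r
    unfolding is_distr_def p_def using finX x0 by simp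
  have eq: "N b y = mat_sum dN {0} (\<lambda>r. complex_of_real 1 \<cdot>\<^sub>m
             mat_sum dN I0 (\<lambda>i. mat_sum dN X (\<lambda>x. mat_sum dN A (\<lambda>a.
               complex_of_real (q b a x i y r * p x i y r) \<cdot>\<^sub>m dual_map dN (E r i) (M a x)))))"
    if b: "b \<in> B" and y: "y \<in> Y" for b y
  proof (rule eq_matI)
    show "dim_row (N b y) = dim_row (mat_sum dN {0} (\<lambda>r. complex_of_real 1 \<cdot>\<^sub>m
             mat_sum dN I0 (\<lambda>i. mat_sum dN X (\<lambda>x. mat_sum dN A (\<lambda>a.
               complex_of_real (q b a x i y r * p x i y r) \<cdot>\<^sub>m dual_map dN (E r i) (M a x))))))"
         "dim_col (N b y) = dim_col (mat_sum dN {0} (\<lambda>r. complex_of_real 1 \<cdot>\<^sub>m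
             mat_sum dN I0 (\<lambda>i. mat_sum dN X (\<lambda>x. mat_sum dN A (\<lambda>a.
               complex_of_real (q b a x i y r * p x i y r) \<cdot>\<^sub>m dual_map dN (E r i) (M a x))))))"
      using Nc[OF b y] by auto
    fix k l assume "k < dim_row (mat_sum dN {0} (\<lambda>r. complex_of_real 1 \<cdot>\<^sub>m
             mat_sum dN I0 (\<lambda>i. mat_sum dN X (\<lambda>x. mat_sum dN A (\<lambda>a.
               complex_of_real (q b a x i y r * p x i y r) \<cdot>\<^sub>m dual_map dN (E r i) (M a x))))))"
      "l < dim_col (mat_sum dN {0} (\<lambda>r. complex_of_real 1 \<cdot>\<^sub>m
             mat_sum dN I0 (\<lambda>i. mat_sum dN X (\<lambda>x. mat_sum dN A (\<lambda>a.
               complex_of_real (q b a x i y r * p x i y r) \<cdot>\<^sub>m dual_map dN (E r i) (M a x))))))"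
    hence kl: "k < dN" "l < dN" by auto
    have "mat_sum dN {0} (\<lambda>r. complex_of_real 1 \<cdot>\<^sub>m
             mat_sum dN I0 (\<lambda>i. mat_sum dN X (\<lambda>x. mat_sum dN A (\<lambda>a.
               complex_of_real (q b a x i y r * p x i y r) \<cdot>\<^sub>m dual_map dN (E r i) (M a x))))) $$ (k,l)
        = (\<Sum>i\<in>I0. \<Sum>x\<in>X. \<Sum>a\<in>A. complex_of_real (pN' b i y * p x i y 0) * (M a x $$ (0,0) * Nt i $$ (k,l)))"
      using kl by (simp add: q_def E_def) (intro sum.cong refl, simp add: dual_mp[OF Ntc Mc dM0] kl Ntd)
    also have "\<dots> = (\<Sum>i\<in>I0. \<Sum>a\<in>A. complex_of_real (pN' b i y) * (M a x0 $$ (0,0) * Nt i $$ (k,l)))"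
    proof (intro sum.cong refl)
      fix i assume "i \<in> I0"
      have "(\<Sum>x\<in>X. \<Sum>a\<in>A. complex_of_real (pN' b i y * p x i y 0) * (M a x $$ (0,0) * Nt i $$ (k,l)))
          = (\<Sum>x\<in>X. if x = x0 then (\<Sum>a\<in>A. complex_of_real (pN' b i y) * (M a x0 $$ (0,0) * Nt i $$ (k,l))) else 0)"
        by (intro sum.cong refl) (simp add: p_def)
      also have "\<dots> = (\<Sum>a\<in>A. complex_of_real (pN' b i y) * (M a x0 $$ (0,0) * Nt i $$ (k,l)))"
        using finX x0 by simp
      finally show "(\<Sum>x\<in>X. \<Sum>a\<in>A. complex_of_real (pN' b i y * p x i y 0) * (M a x $$ (0,0) * Nt i $$ (k,l)))
          = (\<Sum>a\<in>A. complex_of_real (pN' b i y) * (M a x0 $$ (0,0) * Nt i $$ (k,l)))" .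
    qed
    also have "\<dots> = (\<Sum>i\<in>I0. complex_of_real (pN' b i y) * Nt i $$ (k,l) * (\<Sum>a\<in>A. M a x0 $$ (0,0)))"
      by (intro sum.cong refl) (simp add: sum_distrib_left sum_distrib_right algebra_simps)
    also have "\<dots> = N b y $$ (k,l)"
      using Neq b y kl by (simp add: Msum) (intro sum.cong refl, simp add: Ntd)
    finally show "N b y $$ (k,l) = mat_sum dN {0} (\<lambda>r. complex_of_real 1 \<cdot>\<^sub>m
             mat_sum dN I0 (\<lambda>i. mat_sum dN X (\<lambda>x. mat_sum dN A (\<lambda>a.
               complex_of_real (q b a x i y r * p x i y r) \<cdot>\<^sub>m dual_map dN (E r i) (M a x))))) $$ (k,l)"
      by simp
  qed
  show ?thesis
    unfolding simulates_def
    apply (rule exI[of _ "{0::nat}"], rule exI[of _ "\<lambda>_. 1"], rule exI[of _ "\<lambda>_. I0"],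
           rule exI[of _ E], rule exI[of _ p], rule exI[of _ q])
    using inst pd dist eq by (auto simp: is_distr_def q_def)
qed


theorem lemma1:
  fixes dQ dQ' :: nat
    and A :: "'a set" and X :: "'x set" and M :: "'a \<Rightarrow> 'x \<Rightarrow> complex mat"
    and B :: "'b set" and Y :: "'y set" and N :: "'b \<Rightarrow> 'y \<Rightarrow> complex mat"
  assumes "1 \<le> dQ" and "1 \<le> dQ'"
    and "pmd dQ A X M" and "simple_pmd dQ A X M"
    and "pmd dQ' B Y N" and "simple_pmd dQ' B Y N"
  shows "simulates dQ A X M dQ' B Y N \<and> simulates dQ' B Y N dQ A X M"
  using sim_one[OF assms(1,3,5,6)] sim_one[OF assms(2,5,3,4)] by blast

end
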